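(* Let $G=(V,E)$ be a connected comparability graph. Then the acyclic orientations of $E$ whose induced posets have the maximum number of linear extensions (among all acyclic orientations of $E$) are exactly the transitive orientations of $G$.
   Context: A comparability graph is a simple undirected graph $G=(V,E)$ for which there is a partial order on $V$ under which two distinct vertices $u,v$ are comparable if and only if $\{u,v\}\in E$. An acyclic orientation of $E$ induces a partial order on $V$ in which $u<v$ if and only if there is a directed path from $u$ to $v$. An acyclic orientation $O$ of $E$ is a transitive orientation of $G$ if the comparability graph of the poset induced by $O$ equals $G$ (i.e. two distinct vertices are comparable in the induced poset iff they are adjacent in $G$). A linear extension of a partial order $P$ on an $n$-element set $V$ is a bijection $\sigma:V\to[n]$ such that $u<_P v$ implies $\sigma(u)<\sigma(v)$. *)

theory Defs
  imports "HOL-Library.FuncSet"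
begin

definition simple_graph :: "'a set \<Rightarrow> 'a set set \<Rightarrow> bool" where
  "simple_graph V E \<longleftrightarrow> finite V \<and>
     (\<forall>e\<in>E. \<exists>u v. u \<in> V \<and> v \<in> V \<and> u \<noteq> v \<and> e = {u, v})"

definition connected_graph :: "'a set \<Rightarrow> 'a set set \<Rightarrow> bool" where
  "connected_graph V E \<longleftrightarrow>
     (\<forall>u\<in>V. \<forall>v\<in>V. (u, v) \<in> {(x, y). {x, y} \<in> E}\<^sup>*)"

definition comparability_graph :: "'a set \<Rightarrow> 'a set set \<Rightarrow> bool" where
  "comparability_graph V E \<longleftrightarrow> simple_graph V E \<and>
     (\<exists>R. R \<subseteq> V \<times> V \<and> irrefl R \<and> trans R \<and>
        (\<forall>u\<in>V. \<forall>v\<in>V. u \<noteq> v \<longrightarrow> ({u, v} \<in> E \<longleftrightarrow> (u, v) \<in> R \<or> (v, u) \<in> R)))"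

text \<open>An orientation of E: a set of arcs, each arc along an edge, each edge
  receiving a direction. Acyclicity (no directed cycle, in particular no 2-cycle)
  ensures each edge gets exactly one direction.\<close>
definition acyclic_orientation :: "'a set \<Rightarrow> 'a set set \<Rightarrow> ('a \<times> 'a) set \<Rightarrow> bool" where
  "acyclic_orientation V E Or \<longleftrightarrow>
     (\<forall>u v. (u, v) \<in> Or \<longrightarrow> {u, v} \<in> E) \<and>
     (\<forall>u v. {u, v} \<in> E \<longrightarrow> (u, v) \<in> Or \<or> (v, u) \<in> Or) \<and>
     acyclic Or"

definition transitive_orientation :: "'a set \<Rightarrow> 'a set set \<Rightarrow> ('a \<times> 'a) set \<Rightarrow> bool" where
  "transitive_orientation V E Or \<longleftrightarrow> acyclic_orientation V E Or \<and>
     (\<forall>u\<in>V. \<forall>v\<in>V. u \<noteq> v \<longrightarrow> ({u, v} \<in> E \<longleftrightarrow> (u, v) \<in> Or\<^sup>+ \<or> (v, u) \<in> Or\<^sup>+))"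

definition linear_extensions :: "'a set \<Rightarrow> ('a \<times> 'a) set \<Rightarrow> ('a \<Rightarrow> nat) set" where
  "linear_extensions V P = {\<sigma> \<in> extensional V. bij_betw \<sigma> V {1..card V} \<and>
     (\<forall>u v. (u, v) \<in> P \<longrightarrow> \<sigma> u < \<sigma> v)}"

definition num_linext :: "'a set \<Rightarrow> ('a \<times> 'a) set \<Rightarrow> nat" where
  "num_linext V Or = card (linear_extensions V (Or\<^sup>+))"

end

theory Submission
  imports Defs Complex_Main
begin


definition chainset :: "('a \<times> 'a) set \<Rightarrow> 'a set \<Rightarrow> bool" where
  "chainset P C \<longleftrightarrow> (\<forall>x\<in>C. \<forall>y\<in>C. x \<noteq> y \<longrightarrow> (x,y) \<in> P \<or> (y,x) \<in> P)"

definition OPm :: "'a set \<Rightarrow> ('a \<times> 'a) set \<Rightarrow> nat \<Rightarrow> ('a \<Rightarrow> nat) set" where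
  "OPm V P m = {f \<in> V \<rightarrow>\<^sub>E {0..m}. \<forall>u v. (u,v) \<in> P \<longrightarrow> f u \<le> f v}"

definition CHm :: "'a set \<Rightarrow> ('a \<times> 'a) set \<Rightarrow> nat \<Rightarrow> ('a \<Rightarrow> nat) set" where
  "CHm V P m = {g \<in> V \<rightarrow>\<^sub>E {0..m}. \<forall>C. C \<subseteq> V \<longrightarrow> chainset P C \<longrightarrow> sum g C \<le> m}"

locale spo =
  fixes V :: "'a set" and P :: "('a \<times> 'a) set"
  assumes finV: "finite V" and PV: "P \<subseteq> V \<times> V" and trP: "trans P" and irP: "irrefl P"
begin

definition pred where "pred v = {u. (u,v) \<in> P}"
definition tch where "tch v = {C. C \<subseteq> V \<and> chainset P C \<and> v \<in> C \<and> (\<forall>c\<in>C. c \<noteq> v \<longrightarrow> (c,v) \<in> P)}"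
definition phi :: "('a \<Rightarrow> nat) \<Rightarrow> 'a \<Rightarrow> nat" where
  "phi f v = (if v \<in> V then f v - Max (insert 0 (f ` pred v)) else undefined)"
definition psi :: "('a \<Rightarrow> nat) \<Rightarrow> 'a \<Rightarrow> nat" where
  "psi g v = (if v \<in> V then Max ((\<lambda>C. sum g C) ` tch v) else undefined)"

lemma pred_sub: "pred v \<subseteq> V" using PV unfolding pred_def by auto
lemma fin_pred: "finite (pred v)" using pred_sub finV finite_subset by blast
lemma Pirr: "(x,x) \<notin> P" using irP by (simp add: irrefl_def)
lemma Ptr: "(x,y) \<in> P \<Longrightarrow> (y,z) \<in> P \<Longrightarrow> (x,z) \<in> P" using trP by (meson transD)
lemma Pasym: "(x,y) \<in> P \<Longrightarrow> (y,x) \<notin> P" using Pirr Ptr by blast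

lemma tch_single: "v \<in> V \<Longrightarrow> {v} \<in> tch v" unfolding tch_def chainset_def by auto
lemma fin_tch: "finite (tch v)"
proof -
  have "tch v \<subseteq> Pow V" unfolding tch_def by auto
  then show ?thesis using finV finite_subset by blast
qed
lemma tch_fin: "C \<in> tch v \<Longrightarrow> finite C" unfolding tch_def using finV finite_subset by blast

lemma chain_top:
  assumes "finite C" "C \<noteq> {}" "C \<subseteq> V" "chainset P C"
  shows "\<exists>t\<in>C. C \<in> tch t"
  using assms
proof (induction C rule: finite_ne_induct)
  case (singleton x) then show ?case using tch_single by auto
next
  case (insert x F)
  then have "chainset P F" unfolding chainset_def by blast
  with insert obtain t where t: "t \<in> F" "F \<in> tch t" by auto
  have xt: "x \<noteq> t" using insert t by auto
  then have "(x,t) \<in> P \<or> (t,x) \<in> P" using insert(6) t unfolding chainset_def by auto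
  then show ?case
  proof
    assume "(x,t) \<in> P" then show ?thesis using t insert unfolding tch_def by auto
  next
    assume tx: "(t,x) \<in> P"
    have "\<forall>c\<in>insert x F. c \<noteq> x \<longrightarrow> (c,x) \<in> P"
    proof (intro ballI impI)
      fix c assume "c \<in> insert x F" "c \<noteq> x"
      then have "c \<in> F" by simp
      then have "c = t \<or> (c,t) \<in> P" using t unfolding tch_def by blast
      then show "(c,x) \<in> P" using tx Ptr by blast
    qed
    then show ?thesis using insert unfolding tch_def by auto
  qed
qed

lemma tch_insert:
  assumes "C \<in> tch u" "(u,v) \<in> P"
  shows "insert v C \<in> tch v" "v \<notin> C"
proof -
  have below: "\<forall>c\<in>C. (c,v) \<in> P"
  proof
    fix c assume "c \<in> C"
    then have "c = u \<or> (c,u) \<in> P" using assms(1) unfolding tch_def by blast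
    then show "(c,v) \<in> P" using assms(2) Ptr by blast
  qed
  then show "v \<notin> C" using Pirr by blast
  show "insert v C \<in> tch v" using assms below PV unfolding tch_def chainset_def by auto
qed

lemma tch_remove:
  assumes "C \<in> tch v" "C - {v} \<noteq> {}"
  shows "\<exists>t. (t,v) \<in> P \<and> C - {v} \<in> tch t"
proof -
  have 1: "finite (C - {v})" using tch_fin assms(1) by blast
  have 2: "C - {v} \<subseteq> V" using assms(1) unfolding tch_def by blast
  have 3: "chainset P (C - {v})" using assms(1) unfolding tch_def chainset_def by blast
  obtain t where t: "t \<in> C - {v}" "C - {v} \<in> tch t" using chain_top[OF 1 assms(2) 2 3] by blast
  have "\<forall>c\<in>C. c \<noteq> v \<longrightarrow> (c,v) \<in> P" using assms(1) unfolding tch_def by blast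
  then have "(t,v) \<in> P" using t(1) by blast
  then show ?thesis using t(2) by blast
qed

lemma Max_ins0_le: "finite S \<Longrightarrow> (\<forall>x\<in>S. x \<le> (k::nat)) \<Longrightarrow> Max (insert 0 S) \<le> k"
  by simp

lemma OP_pred_le: "f \<in> OPm V P m \<Longrightarrow> Max (insert 0 (f ` pred v)) \<le> f v"
  using fin_pred unfolding OPm_def pred_def by auto

lemma phi_sum:
  assumes f: "f \<in> OPm V P m"
  shows "C \<in> tch v \<Longrightarrow> sum (phi f) C \<le> f v"
proof (induction "card C" arbitrary: C v rule: less_induct)
  case less
  have vV: "v \<in> V" and vC: "v \<in> C" using less.prems unfolding tch_def by auto
  have fC: "finite C" using tch_fin less.prems by blast
  have M: "Max (insert 0 (f ` pred v)) \<le> f v" using OP_pred_le f by blast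
  have pv: "phi f v = f v - Max (insert 0 (f ` pred v))" using vV unfolding phi_def by simp
  have split: "sum (phi f) C = phi f v + sum (phi f) (C - {v})"
    using fC vC by (simp add: sum.remove)
  show ?case
  proof (cases "C - {v} = {}")
    case True
    then have "sum (phi f) (C - {v}) = 0" by (simp only: sum.empty)
    then show ?thesis using split pv by simp
  next
    case False
    then obtain t where t: "(t,v) \<in> P" "C - {v} \<in> tch t" using tch_remove less.prems by blast
    have "card (C - {v}) < card C" using fC vC by (meson card_Diff1_less)
    then have IH: "sum (phi f) (C - {v}) \<le> f t" using less t by blast
    have "f t \<le> Max (insert 0 (f ` pred v))" using t fin_pred unfolding pred_def by auto
    then show ?thesis using split pv IH M by linarith
  qed
qed

lemma wfP: "wf P"
proof -
  have "finite P" using PV finV finite_subset by blast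
  moreover have "acyclic P" using trP irP by (simp add: acyclic_irrefl trancl_id)
  ultimately show ?thesis by (rule finite_acyclic_wf)
qed

lemma phi_achieve:
  assumes f: "f \<in> OPm V P m"
  shows "v \<in> V \<Longrightarrow> \<exists>C\<in>tch v. sum (phi f) C = f v"
proof (induction v rule: wf_induct[OF wfP])
  case (1 v)
  have pv: "phi f v = f v - Max (insert 0 (f ` pred v))" using 1 unfolding phi_def by simp
  have M: "Max (insert 0 (f ` pred v)) \<le> f v" using OP_pred_le f by blast
  show ?case
  proof (cases "pred v = {}")
    case True
    then show ?thesis using pv tch_single[OF 1(2)] by (intro bexI[of _ "{v}"]) auto
  next
    case False
    then have "f ` pred v \<noteq> {}" by simp
    then have "Max (f ` pred v) \<in> f ` pred v" using fin_pred by (intro Max_in) auto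
    then obtain u where u: "u \<in> pred v" "f u = Max (f ` pred v)" by auto
    have Mu: "Max (insert 0 (f ` pred v)) = f u"
      using u fin_pred False by (simp add: Max_insert)
    have uP: "(u,v) \<in> P" using u unfolding pred_def by simp
    then have uV: "u \<in> V" using PV by auto
    obtain Cu where Cu: "Cu \<in> tch u" "sum (phi f) Cu = f u" using 1(1) uP uV by blast
    have ins: "insert v Cu \<in> tch v" "v \<notin> Cu" using tch_insert[OF Cu(1) uP] by auto
    have "sum (phi f) (insert v Cu) = phi f v + f u"
      using ins tch_fin[OF Cu(1)] Cu by simp
    also have "\<dots> = f v" using pv Mu M by simp
    finally show ?thesis using ins by blast
  qed
qed

lemma psi_phi: assumes f: "f \<in> OPm V P m" shows "psi (phi f) = f"
proof
  fix v show "psi (phi f) v = f v"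
  proof (cases "v \<in> V")
    case True
    obtain C where C: "C \<in> tch v" "sum (phi f) C = f v" using phi_achieve[OF f True] by blast
    have ne: "(\<lambda>C. sum (phi f) C) ` tch v \<noteq> {}" using C by auto
    have "Max ((\<lambda>C. sum (phi f) C) ` tch v) = f v"
      apply (rule Max_eqI)
      apply (simp add: fin_tch)
      using phi_sum[OF f] apply blast
      using C by (metis image_eqI)
    then show ?thesis using True unfolding psi_def by simp
  next
    case False
    have "f \<in> extensional V" using f unfolding OPm_def PiE_def by blast
    then show ?thesis using False unfolding psi_def extensional_def by simp
  qed
qed

lemma OP_le_m: "f \<in> OPm V P m \<Longrightarrow> v \<in> V \<Longrightarrow> f v \<le> m"
  unfolding OPm_def PiE_iff by auto

lemma phi_in: assumes f: "f \<in> OPm V P m" shows "phi f \<in> CHm V P m"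
proof -
  have ext: "phi f \<in> extensional V" unfolding phi_def extensional_def by auto
  have range: "phi f v \<le> m" if "v \<in> V" for v
  proof -
    have "phi f v \<le> f v" using that unfolding phi_def by simp
    then show ?thesis using OP_le_m[OF f that] by linarith
  qed
  have ch: "\<forall>C. C \<subseteq> V \<longrightarrow> chainset P C \<longrightarrow> sum (phi f) C \<le> m"
  proof (intro allI impI)
    fix C assume CV: "C \<subseteq> V" "chainset P C"
    show "sum (phi f) C \<le> m"
    proof (cases "C = {}")
      case True then show ?thesis by simp
    next
      case False
      have "finite C" using CV finV finite_subset by blast
      then obtain t where t: "t \<in> C" "C \<in> tch t" using chain_top[OF _ False CV] by blast
      have "t \<in> V" using t CV by blast
      then have "f t \<le> m" using OP_le_m[OF f] by blast
      then show ?thesis using phi_sum[OF f t(2)] by simp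
    qed
  qed
  have "phi f \<in> V \<rightarrow>\<^sub>E {0..m}" using ext range by (simp add: PiE_iff)
  then show ?thesis unfolding CHm_def using ch by blast
qed

lemma psi_le_m: assumes g: "g \<in> CHm V P m" and v: "v \<in> V" shows "psi g v \<le> m"
proof -
  have "\<forall>x\<in>(\<lambda>C. sum g C) ` tch v. x \<le> m" using g unfolding CHm_def tch_def by auto
  moreover have "(\<lambda>C. sum g C) ` tch v \<noteq> {}" using tch_single[OF v] by auto
  ultimately have "Max ((\<lambda>C. sum g C) ` tch v) \<le> m" using fin_tch by (subst Max_le_iff) auto
  then show ?thesis using v unfolding psi_def by simp
qed

lemma psi_attain: assumes v: "v \<in> V" shows "\<exists>C\<in>tch v. psi g v = sum g C"
proof -
  have "(\<lambda>C. sum g C) ` tch v \<noteq> {}" using tch_single[OF v] by auto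
  then have "Max ((\<lambda>C. sum g C) ` tch v) \<in> (\<lambda>C. sum g C) ` tch v" using fin_tch by (intro Max_in) auto
  then show ?thesis using v unfolding psi_def by auto
qed

lemma psi_ge: assumes "C \<in> tch v" shows "sum g C \<le> psi g v"
proof -
  have "v \<in> V" using assms unfolding tch_def by auto
  then show ?thesis using assms fin_tch unfolding psi_def by auto
qed

lemma psi_in: assumes g: "g \<in> CHm V P m" shows "psi g \<in> OPm V P m"
proof -
  have ext: "psi g \<in> extensional V" unfolding psi_def extensional_def by auto
  have mono: "psi g u \<le> psi g v" if uv: "(u,v) \<in> P" for u v
  proof -
    have uV: "u \<in> V" using uv PV by auto
    obtain C where C: "C \<in> tch u" "psi g u = sum g C" using psi_attain[OF uV] by blast
    have ins: "insert v C \<in> tch v" "v \<notin> C" using tch_insert[OF C(1) uv] by auto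
    have "sum g C \<le> sum g (insert v C)" using ins tch_fin[OF C(1)] by simp
    also have "\<dots> \<le> psi g v" using psi_ge[OF ins(1)] .
    finally show ?thesis using C by simp
  qed
  have "psi g \<in> V \<rightarrow>\<^sub>E {0..m}" using ext psi_le_m[OF g] by (simp add: PiE_iff)
  then show ?thesis unfolding OPm_def using mono by blast
qed

lemma phi_psi: assumes g: "g \<in> CHm V P m" shows "phi (psi g) = g"
proof
  fix v show "phi (psi g) v = g v"
  proof (cases "v \<in> V")
    case vV: True
    define M where "M = Max (insert 0 (psi g ` pred v))"
    have eq: "psi g v = g v + M"
    proof (rule antisym)
      obtain C where C: "C \<in> tch v" "psi g v = sum g C" using psi_attain[OF vV] by blast
      have fC: "finite C" and vC: "v \<in> C" using tch_fin C unfolding tch_def by auto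
      have split: "sum g C = g v + sum g (C - {v})" using fC vC by (simp add: sum.remove)
      show "psi g v \<le> g v + M"
      proof (cases "C - {v} = {}")
        case True
        then have "sum g (C - {v}) = 0" by (simp only: sum.empty)
        then show ?thesis using C split by simp
      next
        case False
        then obtain t where t: "(t,v) \<in> P" "C - {v} \<in> tch t" using tch_remove C by blast
        have "sum g (C - {v}) \<le> psi g t" using psi_ge[OF t(2)] .
        also have "\<dots> \<le> M" unfolding M_def using t fin_pred by (auto simp: pred_def)
        finally show ?thesis using C split by simp
      qed
    next
      have "\<forall>x \<in> insert 0 (psi g ` pred v). g v + x \<le> psi g v"
      proof
        fix x assume "x \<in> insert 0 (psi g ` pred v)"
        then show "g v + x \<le> psi g v"
        proof
          assume "x = 0" then show ?thesis using psi_ge[OF tch_single[OF vV], of g] by simp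
        next
          assume "x \<in> psi g ` pred v"
          then obtain t where t: "(t,v) \<in> P" "x = psi g t" unfolding pred_def by auto
          have tV: "t \<in> V" using t PV by auto
          obtain C where C: "C \<in> tch t" "psi g t = sum g C" using psi_attain[OF tV] by blast
          have ins: "insert v C \<in> tch v" "v \<notin> C" using tch_insert[OF C(1) t(1)] by auto
          have "g v + x = sum g (insert v C)" using ins tch_fin[OF C(1)] C t by simp
          then show ?thesis using psi_ge[OF ins(1)] by simp
        qed
      qed
      moreover have "M \<in> insert 0 (psi g ` pred v)" unfolding M_def using fin_pred by (intro Max_in) auto
      ultimately show "g v + M \<le> psi g v" by blast
    qed
    then show ?thesis using vV unfolding phi_def M_def by simp
  next
    case False
    have "g \<in> extensional V" using g unfolding CHm_def PiE_def by blast
    then show ?thesis using False unfolding phi_def extensional_def by simp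
  qed
qed

lemma transfer: "card (OPm V P m) = card (CHm V P m)"
proof -
  have "bij_betw phi (OPm V P m) (CHm V P m)"
    by (rule bij_betw_byWitness[where f'=psi]) (auto simp: psi_phi phi_psi phi_in psi_in)
  then show ?thesis by (rule bij_betw_same_card)
qed

end


lemma enum_nat_set:
  fixes A :: "nat set"
  assumes "finite A" "card A = n"
  shows "\<exists>h. bij_betw h {1..n} A \<and> (\<forall>i\<in>{1..n}. \<forall>j\<in>{1..n}. i < j \<longrightarrow> h i < h j)"
proof -
  define xs where "xs = sorted_list_of_set A"
  have sw: "sorted_wrt (<) xs" unfolding xs_def by (simp add: strict_sorted_list_of_set)
  have len: "length xs = n" unfolding xs_def using assms by simp
  have st: "set xs = A" unfolding xs_def using assms by simp
  define h where "h i = xs ! (i - 1)" for i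
  have mono: "\<forall>i\<in>{1..n}. \<forall>j\<in>{1..n}. i < j \<longrightarrow> h i < h j"
  proof (intro ballI impI)
    fix i j assume "i \<in> {1..n}" "j \<in> {1..n}" "i < j"
    then have "i - 1 < j - 1" "j - 1 < length xs" using len by auto
    then show "h i < h j" unfolding h_def using sorted_wrt_nth_less[OF sw] by blast
  qed
  have inj: "inj_on h {1..n}"
  proof (rule inj_onI)
    fix i j assume "i \<in> {1..n}" "j \<in> {1..n}" "h i = h j"
    then show "i = j" using mono by (metis less_irrefl linorder_neqE_nat)
  qed
  have img: "h ` {1..n} = A"
  proof -
    have "h ` {1..n} = (\<lambda>k. xs ! k) ` {..<n}"
    proof (rule set_eqI, rule iffI)
      fix x assume "x \<in> h ` {1..n}"
      then obtain i where "i \<in> {1..n}" "x = xs ! (i - 1)" unfolding h_def by auto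
      then show "x \<in> (\<lambda>k. xs ! k) ` {..<n}" by (intro image_eqI[of _ _ "i - 1"]) auto
    next
      fix x assume "x \<in> (\<lambda>k. xs ! k) ` {..<n}"
      then obtain k where "k < n" "x = xs ! k" by auto
      then show "x \<in> h ` {1..n}" unfolding h_def by (intro image_eqI[of _ _ "k + 1"]) auto
    qed
    also have "\<dots> = set xs" using len by (auto simp: in_set_conv_nth)
    finally show ?thesis using st by simp
  qed
  show ?thesis using inj img mono unfolding bij_betw_def by blast
qed

context spo begin

definition SA where "SA m A = {f \<in> OPm V P m. f ` V = A}"

lemma card_SA:
  assumes A: "A \<subseteq> {0..m}" "card A = card V"
  shows "card (SA m A) = card (linear_extensions V P)"
proof -
  let ?n = "card V"
  have finA: "finite A" using A finite_subset by blast
  obtain h where h: "bij_betw h {1..?n} A" and hm: "\<forall>i\<in>{1..?n}. \<forall>j\<in>{1..?n}. i < j \<longrightarrow> h i < h j"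
    using enum_nat_set[OF finA A(2)] by blast
  have hrev: "i < j" if "i \<in> {1..?n}" "j \<in> {1..?n}" "h i < h j" for i j
  proof (rule ccontr)
    assume ni: "\<not> i < j"
    show False
    proof (cases "i = j")
      case True then show False using that(3) by simp
    next
      case False then have "j < i" using ni by auto
      then have "h j < h i" using hm that(1,2) by blast
      then show False using that(3) by simp
    qed
  qed
  define F where "F \<sigma> = restrict (h \<circ> \<sigma>) V" for \<sigma> :: "'a \<Rightarrow> nat"
  define G where "G f = restrict (inv_into {1..?n} h \<circ> f) V" for f :: "'a \<Rightarrow> nat"
  have "bij_betw F (linear_extensions V P) (SA m A)"
  proof (rule bij_betw_byWitness[where f'=G])
    show "\<forall>\<sigma>\<in>linear_extensions V P. G (F \<sigma>) = \<sigma>"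
    proof
      fix \<sigma> assume s: "\<sigma> \<in> linear_extensions V P"
      then have sb: "bij_betw \<sigma> V {1..?n}" and se: "\<sigma> \<in> extensional V" unfolding linear_extensions_def by auto
      show "G (F \<sigma>) = \<sigma>"
      proof (rule extensionalityI[OF _ se])
        show "G (F \<sigma>) \<in> extensional V" unfolding G_def by simp
        fix v assume v: "v \<in> V"
        then have "\<sigma> v \<in> {1..?n}" using sb bij_betwE by blast
        then show "G (F \<sigma>) v = \<sigma> v" unfolding G_def F_def using v h
          by (simp add: bij_betw_def inv_into_f_f)
      qed
    qed
    show "\<forall>f\<in>SA m A. F (G f) = f"
    proof
      fix f assume f: "f \<in> SA m A"
      then have fe: "f \<in> extensional V" and fi: "f ` V = A" unfolding SA_def OPm_def PiE_def by auto
      show "F (G f) = f"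
      proof (rule extensionalityI[OF _ fe])
        show "F (G f) \<in> extensional V" unfolding F_def by simp
        fix v assume v: "v \<in> V"
        then have "f v \<in> h ` {1..?n}" using fi h unfolding bij_betw_def by auto
        then show "F (G f) v = f v" unfolding G_def F_def using v by (simp add: f_inv_into_f)
      qed
    qed
    show "F ` linear_extensions V P \<subseteq> SA m A"
    proof
      fix g assume "g \<in> F ` linear_extensions V P"
      then obtain \<sigma> where s: "\<sigma> \<in> linear_extensions V P" and g: "g = F \<sigma>" by blast
      then have sb: "bij_betw \<sigma> V {1..?n}" and so: "\<forall>u v. (u,v) \<in> P \<longrightarrow> \<sigma> u < \<sigma> v"
        unfolding linear_extensions_def by auto
      have img: "g ` V = A"
      proof -
        have "g ` V = h ` \<sigma> ` V" unfolding g F_def by (auto simp: image_iff)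
        also have "\<dots> = A" using sb h unfolding bij_betw_def by simp
        finally show ?thesis .
      qed
      have ord: "g u \<le> g v" if uv: "(u,v) \<in> P" for u v
      proof -
        have uv': "u \<in> V" "v \<in> V" using uv PV by auto
        then have "\<sigma> u \<in> {1..?n}" "\<sigma> v \<in> {1..?n}" using sb bij_betwE by blast+
        moreover have "\<sigma> u < \<sigma> v" using so uv by blast
        ultimately have "h (\<sigma> u) < h (\<sigma> v)" using hm by blast
        then show ?thesis unfolding g F_def using uv' by simp
      qed
      have "g \<in> V \<rightarrow>\<^sub>E {0..m}"
      proof -
        have "g \<in> extensional V" unfolding g F_def by simp
        moreover have "\<forall>v\<in>V. g v \<in> {0..m}" using img A(1) by blast
        ultimately show ?thesis by (simp add: PiE_iff)
      qed
      then show "g \<in> SA m A" unfolding SA_def OPm_def using ord img by blast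
    qed
    show "G ` SA m A \<subseteq> linear_extensions V P"
    proof
      fix \<sigma> assume "\<sigma> \<in> G ` SA m A"
      then obtain f where f: "f \<in> SA m A" and s: "\<sigma> = G f" by blast
      then have fi: "f ` V = A" and fo: "\<forall>u v. (u,v) \<in> P \<longrightarrow> f u \<le> f v" unfolding SA_def OPm_def by auto
      have finj: "inj_on f V" using fi A(2) finV by (simp add: eq_card_imp_inj_on)
      have fb: "bij_betw f V A" using finj fi unfolding bij_betw_def by blast
      have ib: "bij_betw (inv_into {1..?n} h) A {1..?n}" using h by (rule bij_betw_inv_into)
      have "bij_betw (inv_into {1..?n} h \<circ> f) V {1..?n}" using bij_betw_trans[OF fb ib] .
      then have sb: "bij_betw \<sigma> V {1..?n}" unfolding s G_def
        by (rule bij_betw_cong[THEN iffD1, rotated]) simp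
      have so: "\<sigma> u < \<sigma> v" if uv: "(u,v) \<in> P" for u v
      proof -
        have uv': "u \<in> V" "v \<in> V" using uv PV by auto
        have "u \<noteq> v" using uv Pirr by blast
        then have "f u \<noteq> f v" using finj uv' inj_on_eq_iff by metis
        then have lt: "f u < f v" using fo uv by (meson le_neq_implies_less)
        have ins: "inv_into {1..?n} h (f u) \<in> {1..?n}" "inv_into {1..?n} h (f v) \<in> {1..?n}"
          using ib fi uv' bij_betwE by blast+
        have "h (inv_into {1..?n} h (f u)) = f u" "h (inv_into {1..?n} h (f v)) = f v"
          using fi uv' h unfolding bij_betw_def by (auto simp: f_inv_into_f)
        then have "inv_into {1..?n} h (f u) < inv_into {1..?n} h (f v)"
          using hrev[OF ins] lt by simp
        then show ?thesis unfolding s G_def using uv' by simp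
      qed
      have "\<sigma> \<in> extensional V" unfolding s G_def by simp
      then show "\<sigma> \<in> linear_extensions V P" unfolding linear_extensions_def using sb so by blast
    qed
  qed
  then show ?thesis by (simp add: bij_betw_same_card)
qed

lemma finite_OPm: "finite (OPm V P m)"
proof -
  have "OPm V P m \<subseteq> V \<rightarrow>\<^sub>E {0..m}" unfolding OPm_def by blast
  moreover have "finite (V \<rightarrow>\<^sub>E {0..m})" using finV by (simp add: finite_PiE)
  ultimately show ?thesis using finite_subset by blast
qed

lemma inj_count:
  "card {f \<in> OPm V P m. inj_on f V} = card (linear_extensions V P) * ((m + 1) choose card V)"
proof -
  let ?AA = "{A. A \<subseteq> {0..m} \<and> card A = card V}"
  have eq: "{f \<in> OPm V P m. inj_on f V} = (\<Union>A\<in>?AA. SA m A)"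
  proof (rule set_eqI, rule iffI)
    fix f assume f: "f \<in> {f \<in> OPm V P m. inj_on f V}"
    then have "f \<in> V \<rightarrow>\<^sub>E {0..m}" unfolding OPm_def by blast
    then have "\<forall>x\<in>V. f x \<in> {0..m}" using PiE_mem by blast
    then have "f ` V \<subseteq> {0..m}" by blast
    moreover have "card (f ` V) = card V" using f by (simp add: card_image)
    ultimately show "f \<in> (\<Union>A\<in>?AA. SA m A)" using f unfolding SA_def by blast
  next
    fix f assume "f \<in> (\<Union>A\<in>?AA. SA m A)"
    then obtain A where A: "A \<in> ?AA" "f \<in> SA m A" by blast
    then have "f \<in> OPm V P m" "f ` V = A" unfolding SA_def by auto
    moreover have "card (f ` V) = card V" using A(1) \<open>f ` V = A\<close> by simp
    ultimately show "f \<in> {f \<in> OPm V P m. inj_on f V}" using finV eq_card_imp_inj_on by blast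
  qed
  have finAA: "finite ?AA"
  proof (rule finite_subset[of _ "Pow {0..m}"])
    show "?AA \<subseteq> Pow {0..m}" by blast
  qed simp
  have "card (\<Union>A\<in>?AA. SA m A) = (\<Sum>A\<in>?AA. card (SA m A))"
  proof (rule card_UN_disjoint[OF finAA])
    show "\<forall>A\<in>?AA. finite (SA m A)" unfolding SA_def using finite_OPm by simp
    show "\<forall>A\<in>?AA. \<forall>B\<in>?AA. A \<noteq> B \<longrightarrow> SA m A \<inter> SA m B = {}" unfolding SA_def by blast
  qed
  also have "\<dots> = (\<Sum>A\<in>?AA. card (linear_extensions V P))"
    by (rule sum.cong) (simp_all add: card_SA)
  also have "\<dots> = card ?AA * card (linear_extensions V P)" by simp
  also have "card ?AA = (m + 1) choose card V" using n_subsets[of "{0..m}" "card V"] by simp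
  finally show ?thesis using eq by simp
qed

end

lemma noninj_count:
  assumes finV: "finite V"
  shows "card {f \<in> V \<rightarrow>\<^sub>E {0..(m::nat)}. \<not> inj_on f V} \<le> card V * card V * (m + 1) ^ (card V - 1)"
proof -
  let ?B = "\<lambda>p. {f \<in> V \<rightarrow>\<^sub>E {0..m}. f (fst p) = f (snd p)}"
  let ?I = "{p \<in> V \<times> V. fst p \<noteq> snd p}"
  have sub: "{f \<in> V \<rightarrow>\<^sub>E {0..m}. \<not> inj_on f V} \<subseteq> (\<Union>p\<in>?I. ?B p)"
  proof
    fix f assume f: "f \<in> {f \<in> V \<rightarrow>\<^sub>E {0..m}. \<not> inj_on f V}"
    then obtain x y where xy: "x \<in> V" "y \<in> V" "f x = f y" "x \<noteq> y" unfolding inj_on_def by blast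
    then have "(x,y) \<in> ?I" by simp
    moreover have "f \<in> ?B (x,y)" using f xy by auto
    ultimately show "f \<in> (\<Union>p\<in>?I. ?B p)" by blast
  qed
  have finI: "finite ?I" using finV by simp
  have each: "card (?B p) \<le> (m + 1) ^ (card V - 1)" if p: "p \<in> ?I" for p
  proof -
    obtain u v where uv: "p = (u,v)" "u \<in> V" "v \<in> V" "u \<noteq> v" using p by auto
    have inj: "inj_on (\<lambda>f. restrict f (V - {v})) (?B p)"
    proof (rule inj_onI)
      fix f g assume f: "f \<in> ?B p" and g: "g \<in> ?B p" and e: "restrict f (V - {v}) = restrict g (V - {v})"
      show "f = g"
      proof (rule extensionalityI[of _ V])
        show "f \<in> extensional V" "g \<in> extensional V" using f g unfolding PiE_def by blast+
        fix w assume w: "w \<in> V"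
        show "f w = g w"
        proof (cases "w = v")
          case True
          have "restrict f (V - {v}) u = restrict g (V - {v}) u" using e by simp
          then have "f u = g u" using uv by simp
          then show ?thesis using f g uv True by simp
        next
          case False
          have "restrict f (V - {v}) w = restrict g (V - {v}) w" using e by simp
          then show ?thesis using False w by simp
        qed
      qed
    qed
    have sub: "(\<lambda>f. restrict f (V - {v})) ` (?B p) \<subseteq> (V - {v}) \<rightarrow>\<^sub>E {0..m}"
    proof
      fix g assume "g \<in> (\<lambda>f. restrict f (V - {v})) ` (?B p)"
      then obtain f where f: "f \<in> V \<rightarrow>\<^sub>E {0..m}" and g: "g = restrict f (V - {v})" by blast
      show "g \<in> (V - {v}) \<rightarrow>\<^sub>E {0..m}" unfolding g restrict_PiE_iff using f PiE_mem by blast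
    qed
    have fin: "finite ((V - {v}) \<rightarrow>\<^sub>E {0..m})" using finV by (simp add: finite_PiE)
    have "card (?B p) \<le> card ((V - {v}) \<rightarrow>\<^sub>E {0..m})" by (rule card_inj_on_le[OF inj sub fin])
    also have "\<dots> = (m + 1) ^ (card V - 1)" using finV uv by (simp add: card_PiE)
    finally show ?thesis .
  qed
  have "card {f \<in> V \<rightarrow>\<^sub>E {0..m}. \<not> inj_on f V} \<le> card (\<Union>p\<in>?I. ?B p)"
  proof (rule card_mono[OF _ sub])
    have "(\<Union>p\<in>?I. ?B p) \<subseteq> V \<rightarrow>\<^sub>E {0..m}" by blast
    moreover have "finite (V \<rightarrow>\<^sub>E {0..m})" using finV by (simp add: finite_PiE)
    ultimately show "finite (\<Union>p\<in>?I. ?B p)" by (rule finite_subset)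
  qed
  also have "\<dots> \<le> (\<Sum>p\<in>?I. card (?B p))" by (rule card_UN_le[OF finI])
  also have "\<dots> \<le> (\<Sum>p\<in>?I. (m + 1) ^ (card V - 1))" using each by (rule sum_mono)
  also have "\<dots> = card ?I * (m + 1) ^ (card V - 1)" by simp
  also have "\<dots> \<le> card V * card V * (m + 1) ^ (card V - 1)"
  proof -
    have "?I \<subseteq> V \<times> V" by blast
    then have "card ?I \<le> card (V \<times> V)" by (rule card_mono[OF finite_cartesian_product[OF finV finV]])
    then show ?thesis by (simp add: card_cartesian_product)
  qed
  finally show ?thesis .
qed

context spo begin

lemma OP_lower: "card (linear_extensions V P) * ((m + 1) choose card V) \<le> card (OPm V P m)"
proof -
  have "{f \<in> OPm V P m. inj_on f V} \<subseteq> OPm V P m" by blast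
  then have "card {f \<in> OPm V P m. inj_on f V} \<le> card (OPm V P m)" by (rule card_mono[OF finite_OPm])
  then show ?thesis using inj_count[of m] by simp
qed

lemma OP_upper: "card (OPm V P m) \<le> card (linear_extensions V P) * ((m + 1) choose card V) + card V * card V * (m + 1) ^ (card V - 1)"
proof -
  have "OPm V P m \<subseteq> {f \<in> OPm V P m. inj_on f V} \<union> {f \<in> V \<rightarrow>\<^sub>E {0..m}. \<not> inj_on f V}"
  proof
    fix f assume f: "f \<in> OPm V P m"
    show "f \<in> {f \<in> OPm V P m. inj_on f V} \<union> {f \<in> V \<rightarrow>\<^sub>E {0..m}. \<not> inj_on f V}"
    proof (cases "inj_on f V")
      case True then show ?thesis using f by blast
    next
      case False
      have "f \<in> V \<rightarrow>\<^sub>E {0..m}" using f unfolding OPm_def by blast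
      then show ?thesis using False by blast
    qed
  qed
  moreover have "finite ({f \<in> OPm V P m. inj_on f V} \<union> {f \<in> V \<rightarrow>\<^sub>E {0..m}. \<not> inj_on f V})"
  proof -
    have "finite (V \<rightarrow>\<^sub>E {0..m})" using finV by (simp add: finite_PiE)
    then have "finite {f \<in> V \<rightarrow>\<^sub>E {0..m}. \<not> inj_on f V}" by simp
    then show ?thesis using finite_OPm by simp
  qed
  ultimately have "card (OPm V P m) \<le> card ({f \<in> OPm V P m. inj_on f V} \<union> {f \<in> V \<rightarrow>\<^sub>E {0..m}. \<not> inj_on f V})"
    by (rule card_mono[rotated])
  also have "\<dots> \<le> card {f \<in> OPm V P m. inj_on f V} + card {f \<in> V \<rightarrow>\<^sub>E {0..m}. \<not> inj_on f V}"
    by (rule card_Un_le)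
  finally show ?thesis using inj_count[of m] noninj_count[OF finV, of m] by linarith
qed

end


definition compar :: "('a \<times> 'a) set \<Rightarrow> 'a \<Rightarrow> 'a \<Rightarrow> bool" where
  "compar P x y \<longleftrightarrow> (x,y) \<in> P \<or> (y,x) \<in> P"

lemma CH_mono:
  assumes "\<forall>x\<in>V. \<forall>y\<in>V. x \<noteq> y \<longrightarrow> compar Q x y \<longrightarrow> compar P x y"
  shows "CHm V P m \<subseteq> CHm V Q m"
proof
  fix g assume g: "g \<in> CHm V P m"
  have "sum g C \<le> m" if "C \<subseteq> V" "chainset Q C" for C
  proof -
    have "chainset P C" using that assms unfolding chainset_def compar_def by blast
    then show ?thesis using g that unfolding CHm_def by blast
  qed
  then show "g \<in> CHm V Q m" using g unfolding CHm_def by blast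
qed

lemma finite_CHm: "finite V \<Longrightarrow> finite (CHm V P m)"
proof -
  assume fV: "finite V"
  have "CHm V P m \<subseteq> V \<rightarrow>\<^sub>E {0..m}" unfolding CHm_def by blast
  moreover have "finite (V \<rightarrow>\<^sub>E {0..m})" using fV by (simp add: finite_PiE)
  ultimately show ?thesis using finite_subset by blast
qed

lemma region:
  assumes fV: "finite V" and u: "u \<in> V" and v: "v \<in> V" and uv: "u \<noteq> v"
    and cP: "compar P u v" and nQ: "\<not> compar Q u v" and k: "k \<ge> 1"
    and sub: "\<forall>x\<in>V. \<forall>y\<in>V. x \<noteq> y \<longrightarrow> compar Q x y \<longrightarrow> compar P x y"
  shows "card (CHm V P (4 * card V * k)) + k ^ card V \<le> card (CHm V Q (4 * card V * k))"
proof -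
  let ?n = "card V"
  let ?m = "4 * ?n * k"
  define S where "S w = (if w = u \<or> w = v then {2 * ?n * k + 1..3 * ?n * k} else {0..k})" for w
  define R where "R = PiE V S"
  have n1: "?n \<ge> 2"
  proof -
    have "{u,v} \<subseteq> V" using u v by blast
    then have "card {u,v} \<le> ?n" using fV card_mono by blast
    then show ?thesis using uv by simp
  qed
  have gm: "g w \<le> ?m" if g: "g \<in> R" and w: "w \<in> V" for g w
  proof -
    have gS: "g w \<in> S w" using g w unfolding R_def by (simp add: PiE_mem)
    have h1: "3 * ?n * k \<le> ?m" by simp
    have h2: "k \<le> ?m" using n1 by simp
    show ?thesis
    proof (cases "w = u \<or> w = v")
      case True then have "g w \<le> 3 * ?n * k" using gS unfolding S_def by auto
      then show ?thesis using h1 by linarith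
    next
      case False then have "g w \<le> k" using gS unfolding S_def by auto
      then show ?thesis using h2 by linarith
    qed
  qed
  have RQ: "R \<subseteq> CHm V Q ?m"
  proof
    fix g assume g: "g \<in> R"
    have ext: "g \<in> extensional V" using g unfolding R_def PiE_def by blast
    have rng: "g \<in> V \<rightarrow>\<^sub>E {0..?m}" using ext gm[OF g] by (simp add: PiE_iff)
    have "sum g C \<le> ?m" if C: "C \<subseteq> V" "chainset Q C" for C
    proof -
      have notboth: "\<not> (u \<in> C \<and> v \<in> C)" using C nQ uv unfolding chainset_def compar_def by blast
      define x where "x = (if u \<in> C then u else v)"
      have x: "x \<in> V" "x = u \<or> x = v" unfolding x_def using u v by auto
      have other: "w \<noteq> u \<and> w \<noteq> v" if "w \<in> C - {x}" for w
        using that notboth unfolding x_def by auto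
      have fC: "finite C" using C fV finite_subset by blast
      have le1': "sum g (C - {x}) \<le> of_nat (card (C - {x})) * k"
      proof (rule sum_bounded_above)
        fix w assume w: "w \<in> C - {x}"
        then have "g w \<in> S w" using g C unfolding R_def by (auto simp: PiE_mem)
        then show "g w \<le> k" using other[OF w] unfolding S_def by simp
      qed
      then have le1: "sum g (C - {x}) \<le> card (C - {x}) * k" by simp
      have "C - {x} \<subseteq> V" using C by blast
      then have cardle: "card (C - {x}) \<le> ?n" by (rule card_mono[OF fV])
      have cardle': "card (C - {x}) * k \<le> ?n * k" by (rule mult_le_mono1[OF cardle])
      have gx: "g x \<le> 3 * ?n * k"
      proof -
        have "g x \<in> S x" using g x unfolding R_def by (simp add: PiE_mem)
        then show ?thesis using x unfolding S_def by auto
      qed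
      have "sum g C \<le> g x + sum g (C - {x})"
      proof (cases "x \<in> C")
        case True then show ?thesis using fC by (simp add: sum.remove)
      next
        case False then show ?thesis by simp
      qed
      also have "\<dots> \<le> 3 * ?n * k + ?n * k"
        using gx le1 cardle' by linarith
      also have "\<dots> = ?m" by simp
      finally show ?thesis .
    qed
    then show "g \<in> CHm V Q ?m" unfolding CHm_def using rng by blast
  qed
  have RP: "R \<inter> CHm V P ?m = {}"
  proof (rule ccontr)
    assume "R \<inter> CHm V P ?m \<noteq> {}"
    then obtain g where g: "g \<in> R" "g \<in> CHm V P ?m" by blast
    have ch: "chainset P {u,v}" using cP unfolding chainset_def compar_def by blast
    have uvV: "{u,v} \<subseteq> V" using u v by blast
    have all: "\<forall>C. C \<subseteq> V \<longrightarrow> chainset P C \<longrightarrow> sum g C \<le> ?m" using g(2) unfolding CHm_def by blast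
    have "sum g {u,v} \<le> ?m" using all uvV ch by blast
    moreover have "g u \<in> S u" "g v \<in> S v" using g(1) u v unfolding R_def by (simp_all add: PiE_mem)
    then have "g u \<ge> 2 * ?n * k + 1" "g v \<ge> 2 * ?n * k + 1" unfolding S_def by simp_all
    ultimately show False using uv by simp
  qed
  have cardR: "k ^ ?n \<le> card R"
  proof -
    have "card R = (\<Prod>w\<in>V. card (S w))" unfolding R_def using fV by (simp add: card_PiE)
    moreover have "(\<Prod>w\<in>V. k) \<le> (\<Prod>w\<in>V. card (S w))"
    proof (rule prod_mono)
      fix w assume "w \<in> V"
      have "k \<le> ?n * k" using n1 by simp
      moreover have "card {2 * ?n * k + 1..3 * ?n * k} = ?n * k" by simp
      moreover have "card {0..k} = k + 1" by simp
      ultimately show "0 \<le> k \<and> k \<le> card (S w)" unfolding S_def by simp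
    qed
    ultimately show ?thesis by simp
  qed
  have finR: "finite R" unfolding R_def by (rule finite_PiE[OF fV]) (simp add: S_def)
  have "card (CHm V P ?m) + card R = card (CHm V P ?m \<union> R)"
  proof -
    have "CHm V P ?m \<inter> R = {}" using RP by blast
    then show ?thesis using card_Un_disjoint[OF finite_CHm[OF fV] finR] by simp
  qed
  also have "\<dots> \<le> card (CHm V Q ?m)"
  proof (rule card_mono[OF finite_CHm[OF fV]])
    show "CHm V P ?m \<union> R \<subseteq> CHm V Q ?m" using RQ CH_mono[OF sub] by blast
  qed
  finally show ?thesis using cardR by linarith
qed



lemma cmp_le:
  assumes sP: "spo V P" and sQ: "spo V Q"
    and sub: "\<forall>x\<in>V. \<forall>y\<in>V. x \<noteq> y \<longrightarrow> compar Q x y \<longrightarrow> compar P x y"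
  shows "card (linear_extensions V P) \<le> card (linear_extensions V Q)"
proof (rule ccontr)
  let ?n = "card V"
  let ?eP = "card (linear_extensions V P)"
  let ?eQ = "card (linear_extensions V Q)"
  assume "\<not> ?eP \<le> ?eQ"
  then have e: "?eQ + 1 \<le> ?eP" by simp
  have key: "((m + 1) choose ?n) \<le> ?n * ?n * (m + 1) ^ (?n - 1)" for m
  proof -
    have fV: "finite V" using sP unfolding spo_def by blast
    have "(?eQ + 1) * ((m + 1) choose ?n) \<le> ?eP * ((m + 1) choose ?n)" using e by (rule mult_le_mono1)
    also have "\<dots> \<le> card (OPm V P m)" using spo.OP_lower[OF sP] .
    also have "\<dots> = card (CHm V P m)" using spo.transfer[OF sP] .
    also have "\<dots> \<le> card (CHm V Q m)" using CH_mono[OF sub] finite_CHm[OF fV] by (rule card_mono[rotated])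
    also have "\<dots> = card (OPm V Q m)" using spo.transfer[OF sQ] by simp
    also have "\<dots> \<le> ?eQ * ((m + 1) choose ?n) + ?n * ?n * (m + 1) ^ (?n - 1)" using spo.OP_upper[OF sQ] .
    finally show ?thesis by (simp add: algebra_simps)
  qed
  show False
  proof (cases "?n = 0")
    case True then show False using key[of 0] by simp
  next
    case False
    define N where "N = ?n ^ (?n + 2) + 1"
    have nN: "?n \<le> N"
    proof -
      have "1 \<le> ?n" using False by simp
      then have "?n \<le> ?n ^ (?n + 2)" by (rule self_le_power) simp
      then show ?thesis unfolding N_def by linarith
    qed
    have k: "(N choose ?n) \<le> ?n * ?n * N ^ (?n - 1)" using key[of "N - 1"] unfolding N_def by simp
    have "(real N / real ?n) ^ ?n \<le> real (N choose ?n)" using binomial_ge_n_over_k_pow_k[OF nN, where 'a=real] by simp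
    then have "real N ^ ?n \<le> real (N choose ?n) * real ?n ^ ?n" using False
      by (simp add: power_divide divide_le_eq)
    then have "N ^ ?n \<le> (N choose ?n) * ?n ^ ?n" by (metis of_nat_le_iff of_nat_mult of_nat_power)
    also have "\<dots> \<le> ?n * ?n * N ^ (?n - 1) * ?n ^ ?n" using k by (rule mult_le_mono1)
    also have "\<dots> = ?n ^ (?n + 2) * N ^ (?n - 1)" by (simp add: power_add power2_eq_square)
    finally have A: "N * N ^ (?n - 1) \<le> ?n ^ (?n + 2) * N ^ (?n - 1)"
      using False by (metis power_eq_if)
    have "N ^ (?n - 1) > 0" unfolding N_def by simp
    then have "N \<le> ?n ^ (?n + 2)" using A by simp
    then show False unfolding N_def by simp
  qed
qed

lemma cmp_lt:
  assumes sP: "spo V P" and sQ: "spo V Q"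
    and sub: "\<forall>x\<in>V. \<forall>y\<in>V. x \<noteq> y \<longrightarrow> compar Q x y \<longrightarrow> compar P x y"
    and u: "u \<in> V" and v: "v \<in> V" and uv: "u \<noteq> v" and cP: "compar P u v" and nQ: "\<not> compar Q u v"
  shows "card (linear_extensions V P) < card (linear_extensions V Q)"
proof (rule ccontr)
  let ?n = "card V"
  let ?eP = "card (linear_extensions V P)"
  let ?eQ = "card (linear_extensions V Q)"
  assume "\<not> ?eP < ?eQ"
  then have e: "?eQ \<le> ?eP" by simp
  have fV: "finite V" using sP unfolding spo_def by blast
  have n2: "?n \<ge> 2"
  proof -
    have "{u,v} \<subseteq> V" using u v by blast
    then have "card {u,v} \<le> ?n" using fV card_mono by blast
    then show ?thesis using uv by simp
  qed
  define k where "k = ?n * ?n * (5 * ?n) ^ (?n - 1) + 1"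
  have k1: "k \<ge> 1" unfolding k_def by simp
  define m where "m = 4 * ?n * k"
  have "?eQ * ((m + 1) choose ?n) + k ^ ?n \<le> ?eP * ((m + 1) choose ?n) + k ^ ?n" using e by simp
  also have "\<dots> \<le> card (OPm V P m) + k ^ ?n" using spo.OP_lower[OF sP] by simp
  also have "\<dots> = card (CHm V P m) + k ^ ?n" using spo.transfer[OF sP] by simp
  also have "\<dots> \<le> card (CHm V Q m)" unfolding m_def by (rule region[OF fV u v uv cP nQ k1 sub])
  also have "\<dots> = card (OPm V Q m)" using spo.transfer[OF sQ] by simp
  also have "\<dots> \<le> ?eQ * ((m + 1) choose ?n) + ?n * ?n * (m + 1) ^ (?n - 1)" using spo.OP_upper[OF sQ] .
  finally have A: "k ^ ?n \<le> ?n * ?n * (m + 1) ^ (?n - 1)" by simp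
  have "m + 1 \<le> 5 * ?n * k" unfolding m_def using n2 k1 by simp
  then have "(m + 1) ^ (?n - 1) \<le> (5 * ?n * k) ^ (?n - 1)" by (rule power_mono) simp
  also have "\<dots> = (5 * ?n) ^ (?n - 1) * k ^ (?n - 1)" by (simp add: power_mult_distrib)
  finally have "k ^ ?n \<le> ?n * ?n * ((5 * ?n) ^ (?n - 1) * k ^ (?n - 1))"
    using A by (meson le_trans mult_le_mono2)
  then have B: "k * k ^ (?n - 1) \<le> (k - 1) * k ^ (?n - 1)"
    unfolding k_def using n2 by (simp add: power_eq_if mult.assoc)
  have "k ^ (?n - 1) > 0" using k1 by simp
  then have "k \<le> k - 1" using B by simp
  then show False using k1 by simp
qed



lemma edge_in_V: "simple_graph V E \<Longrightarrow> {u,v} \<in> E \<Longrightarrow> u \<in> V \<and> v \<in> V \<and> u \<noteq> v"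
  unfolding simple_graph_def by (metis doubleton_eq_iff)

lemma orient_spo:
  assumes sg: "simple_graph V E" and ao: "acyclic_orientation V E Or"
  shows "spo V (Or\<^sup>+)"
proof
  show "finite V" using sg unfolding simple_graph_def by blast
  have "Or \<subseteq> V \<times> V"
  proof
    fix p assume p: "p \<in> Or"
    obtain a b where "p = (a,b)" by fastforce
    then have "{a,b} \<in> E" using p ao unfolding acyclic_orientation_def by blast
    then show "p \<in> V \<times> V" using edge_in_V[OF sg] \<open>p = (a,b)\<close> by blast
  qed
  then show "Or\<^sup>+ \<subseteq> V \<times> V" by (rule trancl_subset_Sigma)
  show "trans (Or\<^sup>+)" by (rule trans_trancl)
  show "irrefl (Or\<^sup>+)" using ao unfolding acyclic_orientation_def by (simp add: acyclic_irrefl)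
qed

lemma orient_compar:
  assumes ao: "acyclic_orientation V E Or" and e: "{x,y} \<in> E"
  shows "compar (Or\<^sup>+) x y"
proof -
  have "(x,y) \<in> Or \<or> (y,x) \<in> Or" using ao e unfolding acyclic_orientation_def by blast
  then show ?thesis unfolding compar_def by blast
qed

theorem theorem3p5:
  fixes V :: "'a set" and E :: "'a set set"
  assumes "comparability_graph V E" and "connected_graph V E"
    and "acyclic_orientation V E Or"
  shows "(\<forall>Or'. acyclic_orientation V E Or' \<longrightarrow> num_linext V Or' \<le> num_linext V Or)
         \<longleftrightarrow> transitive_orientation V E Or"
proof -
  have sg: "simple_graph V E" using assms(1) unfolding comparability_graph_def by blast
  obtain R where R: "R \<subseteq> V \<times> V" "irrefl R" "trans R"
    and RE: "\<forall>u\<in>V. \<forall>v\<in>V. u \<noteq> v \<longrightarrow> ({u, v} \<in> E \<longleftrightarrow> (u, v) \<in> R \<or> (v, u) \<in> R)"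
    using assms(1) unfolding comparability_graph_def by blast
  have fV: "finite V" using sg unfolding simple_graph_def by blast
  have Rtr: "R\<^sup>+ = R" using R(3) by (rule trancl_id)
  have sR: "spo V R" using fV R by (simp add: spo_def)
  have aoR: "acyclic_orientation V E R"
    unfolding acyclic_orientation_def
  proof (intro conjI allI impI)
    fix u v assume uv: "(u,v) \<in> R"
    then have "u \<in> V" "v \<in> V" using R(1) by auto
    moreover have "u \<noteq> v" using uv R(2) unfolding irrefl_def by blast
    ultimately show "{u,v} \<in> E" using RE uv by blast
  next
    fix u v assume "{u,v} \<in> E"
    then show "(u,v) \<in> R \<or> (v,u) \<in> R" using edge_in_V[OF sg] RE by blast
  next
    show "acyclic R" using R(2) Rtr by (simp add: acyclic_irrefl)
  qed
  have numR: "num_linext V R = card (linear_extensions V R)" unfolding num_linext_def Rtr ..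
  have sP: "spo V (Or\<^sup>+)" using orient_spo[OF sg assms(3)] .
  have subR: "\<forall>x\<in>V. \<forall>y\<in>V. x \<noteq> y \<longrightarrow> compar R x y \<longrightarrow> compar (O'\<^sup>+) x y"
    if ao': "acyclic_orientation V E O'" for O'
  proof (intro ballI impI)
    fix x y assume "x \<in> V" "y \<in> V" "x \<noteq> y" "compar R x y"
    then have "{x,y} \<in> E" using RE unfolding compar_def by blast
    then show "compar (O'\<^sup>+) x y" using orient_compar[OF ao'] by blast
  qed
  show ?thesis
  proof
    assume max: "\<forall>Or'. acyclic_orientation V E Or' \<longrightarrow> num_linext V Or' \<le> num_linext V Or"
    show "transitive_orientation V E Or"
    proof (rule ccontr)
      assume nt: "\<not> transitive_orientation V E Or"
      then obtain u v where uv: "u \<in> V" "v \<in> V" "u \<noteq> v"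
        and ne: "\<not> ({u, v} \<in> E \<longleftrightarrow> (u, v) \<in> Or\<^sup>+ \<or> (v, u) \<in> Or\<^sup>+)"
        using assms(3) unfolding transitive_orientation_def by blast
      have cP: "compar (Or\<^sup>+) u v" and nE: "{u,v} \<notin> E"
        using ne orient_compar[OF assms(3)] unfolding compar_def by blast+
      have nR: "\<not> compar R u v" using RE uv nE unfolding compar_def by blast
      have "card (linear_extensions V (Or\<^sup>+)) < card (linear_extensions V R)"
        by (rule cmp_lt[OF sP sR subR[OF assms(3)] uv cP nR])
      moreover have "num_linext V R \<le> num_linext V Or" using max aoR by blast
      ultimately show False using numR unfolding num_linext_def by simp
    qed
  next
    assume tr: "transitive_orientation V E Or"
    have sub2: "\<forall>x\<in>V. \<forall>y\<in>V. x \<noteq> y \<longrightarrow> compar (Or\<^sup>+) x y \<longrightarrow> compar R x y"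
    proof (intro ballI impI)
      fix x y assume xy: "x \<in> V" "y \<in> V" "x \<noteq> y" "compar (Or\<^sup>+) x y"
      then have "{x,y} \<in> E" using tr unfolding transitive_orientation_def compar_def by blast
      then show "compar R x y" using RE xy unfolding compar_def by blast
    qed
    have le1: "card (linear_extensions V R) \<le> card (linear_extensions V (Or\<^sup>+))"
      by (rule cmp_le[OF sR sP sub2])
    show "\<forall>Or'. acyclic_orientation V E Or' \<longrightarrow> num_linext V Or' \<le> num_linext V Or"
    proof (intro allI impI)
      fix Or' assume ao': "acyclic_orientation V E Or'"
      have "card (linear_extensions V (Or'\<^sup>+)) \<le> card (linear_extensions V R)"
        by (rule cmp_le[OF orient_spo[OF sg ao'] sR subR[OF ao']])
      then show "num_linext V Or' \<le> num_linext V Or" using le1 unfolding num_linext_def by simp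
    qed
  qed
qed


end
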